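(* Consider the stochastic discrete-time system $x_{k+1}=f(x_k,u_k,w_k)$, $k=0,\dots,N-1$, as described in the context, with a non-random initial state $x_0=x\in\mathcal{X}$, and let $g:\mathcal{X}\to\mathbb{R}$ be any function. For every initial state $x\in\mathcal{X}$ and every confidence level $\alpha\in(0,1]$ there exists a policy $\pi^*\in\Pi$ such that $$\mathrm{CVaR}_\alpha\big[Z^{\pi^*}_x\big]=\inf_{\pi\in\Pi}\mathrm{CVaR}_\alpha\big[Z^{\pi}_x\big]=\min_{\pi\in\Pi}\mathrm{CVaR}_\alpha\big[Z^{\pi}_x\big],$$ where $Z^\pi_x:=\max_{k=0,\dots,N} g(x_k)$ for the state trajectory $(x_0,\dots,x_N)$ generated from $x_0=x$ under $\pi$.
   Context: System: $x_{k+1}=f(x_k,u_k,w_k)$ for $k=0,\dots,N-1$, where $x_k\in\mathcal{X}\subseteq\mathbb{R}^n$, the control space $U$ and the disturbance space $D=\{d_1,\dots,d_W\}$ are finite sets of real vectors, and $f:\mathcal{X}\times U\times D\to\mathcal{X}$ is bounded and Lipschitz continuous. The disturbances $w_0,\dots,w_{N-1}$ are independent of each other and of the states and controls, with $\mathbb{P}[w_k=d_j]=p_j$, $p_j\ge 0$, $\sum_j p_j=1$; they are the only source of randomness (the initial state is deterministic). The policy set is $\Pi:=\{(\mu_0,\dots,\mu_{N-1})\mid \mu_k:H_k\to U\}$, where $H_k=\mathcal{X}^{k+1}$ is the set of state histories $(x_0,\dots,x_k)$, and $u_k=\mu_k(x_0,\dots,x_k)$. For a random variable $Z$ with finite expectation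 and $\alpha\in(0,1]$, $\mathrm{CVaR}_\alpha[Z]:=\min_{t\in\mathbb{R}}\{t+\frac{1}{\alpha}\mathbb{E}[\max\{Z-t,0\}]\}$. *)

theory Defs
  imports "HOL-Analysis.Analysis"
begin

text \<open>Policy set Pi: sequences of maps mu_k from state histories (x_0,...,x_k) to U.
  A history is a list of length k+1 of states in X.\<close>
definition policies :: "nat \<Rightarrow> 'x set \<Rightarrow> 'u set \<Rightarrow> (nat \<Rightarrow> 'x list \<Rightarrow> 'u) set" where
  "policies N X U = {mu. \<forall>k<N. \<forall>h. length h = Suc k \<and> set h \<subseteq> X \<longrightarrow> mu k h \<in> U}"

fun hist :: "('x \<Rightarrow> 'u \<Rightarrow> 'w \<Rightarrow> 'x) \<Rightarrow> (nat \<Rightarrow> 'w) \<Rightarrow> (nat \<Rightarrow> 'x list \<Rightarrow> 'u)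
              \<Rightarrow> 'x \<Rightarrow> nat \<Rightarrow> 'x list" where
  "hist f w mu x 0 = [x]"
| "hist f w mu x (Suc k) = (let h = hist f w mu x k in h @ [f (last h) (mu k h) (w k)])"

text \<open>Z^pi_x = max_{k=0..N} g(x_k), as a function of the index sequence js of the
  disturbances (w_k = d (js k)).\<close>
definition costZ :: "('x \<Rightarrow> 'u \<Rightarrow> 'w \<Rightarrow> 'x) \<Rightarrow> ('x \<Rightarrow> real) \<Rightarrow> (nat \<Rightarrow> 'w)
              \<Rightarrow> (nat \<Rightarrow> 'x list \<Rightarrow> 'u) \<Rightarrow> 'x \<Rightarrow> nat \<Rightarrow> (nat \<Rightarrow> nat) \<Rightarrow> real" where
  "costZ f g d mu x N js = Max (set (map g (hist f (\<lambda>k. d (js k)) mu x N)))"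

text \<open>CVaR of a random variable Z on a finite probability space (Omega, P):
  CVaR_alpha[Z] = min_t { t + (1/alpha) E[max(Z - t, 0)] } (the minimum is attained,
  so it equals the infimum used here).\<close>
definition CVaR :: "real \<Rightarrow> 'o set \<Rightarrow> ('o \<Rightarrow> real) \<Rightarrow> ('o \<Rightarrow> real) \<Rightarrow> real" where
  "CVaR alpha Omega P Z = (INF t::real. t + (1 / alpha) * (\<Sum>om\<in>Omega. P om * max (Z om - t) 0))"

definition dist_seqs :: "nat \<Rightarrow> nat \<Rightarrow> (nat \<Rightarrow> nat) set" where
  "dist_seqs N W = PiE {..<N} (\<lambda>_. {..<W})"

definition seq_prob :: "nat \<Rightarrow> (nat \<Rightarrow> real) \<Rightarrow> (nat \<Rightarrow> nat) \<Rightarrow> real" where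
  "seq_prob N p js = (\<Prod>k<N. p (js k))"

definition CVaR_cost where
  "CVaR_cost alpha f g d p W mu x N =
     CVaR alpha (dist_seqs N W) (seq_prob N p) (costZ f g d mu x N)"

end

theory Submission
  imports Defs
begin

fun reach :: "('x \<Rightarrow> 'u \<Rightarrow> 'w \<Rightarrow> 'x) \<Rightarrow> 'u set \<Rightarrow> (nat \<Rightarrow> 'w) \<Rightarrow> nat \<Rightarrow> 'x \<Rightarrow> nat \<Rightarrow> 'x set" where
  "reach f U d W x 0 = {x}"
| "reach f U d W x (Suc k) = (\<lambda>(y,u,j). f y u (d j)) ` (reach f U d W x k \<times> U \<times> {..<W})"

lemma reach_fin: "finite U \<Longrightarrow> finite (reach f U d W x k)"
  by (induction k) auto

lemma reach_X:
  assumes "\<forall>y\<in>X. \<forall>u\<in>U. \<forall>j<W. f y u (d j) \<in> X" "x \<in> X"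
  shows "reach f U d W x k \<subseteq> X"
  using assms by (induction k) auto

lemma hist_len: "length (hist f w mu x k) = Suc k"
  by (induction k) (auto simp: Let_def)

lemma hist_reach:
  assumes fm: "\<forall>y\<in>X. \<forall>u\<in>U. \<forall>j<W. f y u (d j) \<in> X" and xX: "x \<in> X"
    and mu: "mu \<in> policies N X U" and js: "js \<in> dist_seqs N W"
  shows "k \<le> N \<Longrightarrow> set (hist f (\<lambda>k. d (js k)) mu x k) \<subseteq> (\<Union>i\<le>k. reach f U d W x i)
        \<and> last (hist f (\<lambda>k. d (js k)) mu x k) \<in> reach f U d W x k"
proof (induction k)
  case 0
  then show ?case by auto
next
  case (Suc k)
  let ?h = "hist f (\<lambda>k. d (js k)) mu x k"
  have kN: "k < N" using Suc.prems by simp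
  have IH: "set ?h \<subseteq> (\<Union>i\<le>k. reach f U d W x i)" "last ?h \<in> reach f U d W x k"
    using Suc.IH kN by simp_all
  have RX: "(\<Union>i\<le>k. reach f U d W x i) \<subseteq> X"
    by (intro UN_least) (rule reach_X[where f=f and d=d, OF fm xX])
  have hX: "set ?h \<subseteq> X" using IH(1) RX by (rule order_trans)
  have pol: "\<forall>k<N. \<forall>h. length h = Suc k \<and> set h \<subseteq> X \<longrightarrow> mu k h \<in> U"
    using mu unfolding policies_def by simp
  have "mu k ?h \<in> U" using pol kN hX hist_len[of f _ mu x k] by blast
  moreover have "js k < W" using PiE_mem[OF js[unfolded dist_seqs_def], of k] kN by simp
  ultimately have "(last ?h, mu k ?h, js k) \<in> reach f U d W x k \<times> U \<times> {..<W}"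
    using IH(2) by simp
  hence nw: "f (last ?h) (mu k ?h) (d (js k)) \<in> reach f U d W x (Suc k)"
    unfolding reach.simps by (rule rev_image_eqI) simp
  have eq: "hist f (\<lambda>k. d (js k)) mu x (Suc k) = ?h @ [f (last ?h) (mu k ?h) (d (js k))]"
    by (simp add: Let_def)
  have s1: "set ?h \<subseteq> (\<Union>i\<le>Suc k. reach f U d W x i)"
    using IH(1) by (rule order_trans) (rule UN_mono, auto)
  have s2: "f (last ?h) (mu k ?h) (d (js k)) \<in> (\<Union>i\<le>Suc k. reach f U d W x i)"
    using nw by blast
  show ?case unfolding eq using s1 s2 nw by simp
qed

lemma hist_cong:
  assumes "\<And>i h. i < k \<Longrightarrow> h = hist f w mu x i \<Longrightarrow> mu i h = mu' i h"
  shows "hist f w mu x k = hist f w mu' x k"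
  using assms
proof (induction k)
  case 0 then show ?case by simp
next
  case (Suc k)
  have "hist f w mu x k = hist f w mu' x k" using Suc by auto
  moreover have "mu k (hist f w mu x k) = mu' k (hist f w mu x k)" using Suc.prems by auto
  ultimately show ?case by (simp add: Let_def)
qed

theorem lemma1:
  fixes f :: "real^'n \<Rightarrow> real^'m \<Rightarrow> real^'d \<Rightarrow> real^'n"
    and X :: "(real^'n) set" and U :: "(real^'m) set"
    and d :: "nat \<Rightarrow> real^'d" and p :: "nat \<Rightarrow> real" and W N :: nat
    and g :: "real^'n \<Rightarrow> real" and x :: "real^'n" and alpha :: real
  assumes U_fin: "finite U" and U_ne: "U \<noteq> {}"
    and p_nonneg: "\<forall>j<W. p j \<ge> 0" and p_sum: "(\<Sum>j<W. p j) = 1"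
    and f_maps: "\<forall>y\<in>X. \<forall>u\<in>U. \<forall>j<W. f y u (d j) \<in> X"
    and f_bdd: "bounded ((\<lambda>(y, u, w). f y u w) ` (X \<times> U \<times> d ` {..<W}))"
    and f_lip: "\<exists>L. L-lipschitz_on (X \<times> U \<times> d ` {..<W}) (\<lambda>(y, u, w). f y u w)"
    and x_in: "x \<in> X"
    and alpha: "0 < alpha" "alpha \<le> 1"
  shows "\<exists>pi\<in>policies N X U.
           CVaR_cost alpha f g d p W pi x N
             = (INF mu\<in>policies N X U. CVaR_cost alpha f g d p W mu x N)
         \<and> (\<forall>mu\<in>policies N X U. CVaR_cost alpha f g d p W pi x N \<le> CVaR_cost alpha f g d p W mu x N)"
proof -
  define T where "T = (\<Union>i\<le>N. reach f U d W x i)"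
  have Tfin: "finite T" unfolding T_def using reach_fin[OF U_fin] by auto
  define Hs where "Hs = {h. set h \<subseteq> T \<and> length h \<le> Suc N}"
  have Hfin: "finite Hs" unfolding Hs_def using finite_lists_length_le[OF Tfin] by simp
  define A where "A = {(k,h). k < N \<and> length h = Suc k \<and> set h \<subseteq> T}"
  have "A \<subseteq> {..<N} \<times> Hs" unfolding A_def Hs_def by auto
  hence Afin: "finite A" using Hfin finite_subset by blast
  let ?C = "\<lambda>mu. CVaR_cost alpha f g d p W mu x N"
  let ?P = "policies N X U"
  have key: "?C mu = ?C mu'" if mu: "mu \<in> ?P" and ag: "\<And>k h. (k,h) \<in> A \<Longrightarrow> mu k h = mu' k h" for mu mu'
  proof -
    have "costZ f g d mu x N js = costZ f g d mu' x N js" if js: "js \<in> dist_seqs N W" for js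
    proof -
      have "hist f (\<lambda>k. d (js k)) mu x N = hist f (\<lambda>k. d (js k)) mu' x N"
      proof (rule hist_cong)
        fix i h assume i: "i < N" and h: "h = hist f (\<lambda>k. d (js k)) mu x i"
        have "set h \<subseteq> T" using hist_reach[where f=f and d=d and k=i, OF f_maps x_in mu js] i h unfolding T_def by force
        moreover have "length h = Suc i" using h by (simp only: hist_len)
        ultimately have "(i,h) \<in> A" unfolding A_def using i by auto
        then show "mu i h = mu' i h" by (rule ag)
      qed
      then show ?thesis unfolding costZ_def by simp
    qed
    then show ?thesis unfolding CVaR_cost_def CVaR_def by (simp cong: sum.cong)
  qed
  define ext where "ext = (\<lambda>\<phi>::nat \<times> (real^'n) list \<Rightarrow> real^'m. \<lambda>k h. \<phi> (k,h))"
  have sub: "?C ` ?P \<subseteq> (\<lambda>\<phi>. ?C (ext \<phi>)) ` (PiE A (\<lambda>_. U))"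
  proof
    fix v assume "v \<in> ?C ` ?P"
    then obtain mu where mu: "mu \<in> ?P" and v: "v = ?C mu" by auto
    define \<phi> where "\<phi> = restrict (\<lambda>(k,h). mu k h) A"
    have "\<phi> \<in> PiE A (\<lambda>_. U)"
    proof -
      have "mu k h \<in> U" if "(k,h) \<in> A" for k h
      proof -
        have "set h \<subseteq> X" using that reach_X[where f=f and d=d, OF f_maps x_in] unfolding A_def Hs_def T_def by blast
        moreover have "length h = Suc k" "k < N" using that unfolding A_def by auto
        ultimately show ?thesis using mu unfolding policies_def by auto
      qed
      then show ?thesis unfolding \<phi>_def by auto
    qed
    moreover have "?C mu = ?C (ext \<phi>)" by (rule key[OF mu]) (simp add: ext_def \<phi>_def)
    ultimately show "v \<in> (\<lambda>\<phi>. ?C (ext \<phi>)) ` (PiE A (\<lambda>_. U))" using v by blast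
  qed
  have fin: "finite (?C ` ?P)"
    by (rule finite_subset[OF sub]) (intro finite_imageI finite_PiE Afin U_fin)
  obtain u0 where "u0 \<in> U" using U_ne by auto
  hence "(\<lambda>k h. u0) \<in> ?P" unfolding policies_def by auto
  hence ne: "?C ` ?P \<noteq> {}" by auto
  have "Min (?C ` ?P) \<in> ?C ` ?P" using Min_in[OF fin ne] .
  then obtain pi where pi: "pi \<in> ?P" "?C pi = Min (?C ` ?P)" by auto
  show ?thesis
  proof (intro bexI[OF _ pi(1)] conjI ballI)
    show "?C pi = (INF mu\<in>?P. ?C mu)" using pi(2) cInf_eq_Min[OF fin ne] by simp
    fix mu assume "mu \<in> ?P"
    then show "?C pi \<le> ?C mu" using pi(2) fin by simp
  qed
qed

end
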